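(* Let $\Gamma$ be a simple, undirected, connected graph with $p\ge 2$ vertices, minimum degree $\delta(\Gamma)\ge 2$, maximum degree $\Delta(\Gamma)$ and girth at least $5$. Then $\gamma_{[3R]}(\Gamma)\le 2p-2\Delta(\Gamma)+1$.
   Context: The girth of a graph is the minimum length of a cycle in it. For a graph $\Gamma=(V,E)$ and $h:V\to\{0,1,2,3,4\}$, let $AN(v)=\{w\in N(v):h(w)\ge 1\}$, $AN[v]=AN(v)\cup\{v\}$ and $h(S)=\sum_{u\in S}h(u)$. $h$ is a triple Roman dominating function (3RDF) if every $v$ with $h(v)<3$ satisfies $h(AN[v])\ge|AN(v)|+3$. The triple Roman domination number $\gamma_{[3R]}(\Gamma)$ is the minimum weight $h(V)$ of a 3RDF of $\Gamma$. *)

theory Defs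
  imports Main
begin

definition simple_graph :: "'a set \<Rightarrow> ('a \<Rightarrow> 'a \<Rightarrow> bool) \<Rightarrow> bool" where
  "simple_graph V E \<longleftrightarrow> finite V \<and>
     (\<forall>u v. E u v \<longrightarrow> u \<in> V \<and> v \<in> V) \<and>
     (\<forall>u v. E u v \<longrightarrow> E v u) \<and> (\<forall>v. \<not> E v v)"

definition nbhd :: "'a set \<Rightarrow> ('a \<Rightarrow> 'a \<Rightarrow> bool) \<Rightarrow> 'a \<Rightarrow> 'a set" where
  "nbhd V E v = {w \<in> V. E v w}"

definition degree :: "'a set \<Rightarrow> ('a \<Rightarrow> 'a \<Rightarrow> bool) \<Rightarrow> 'a \<Rightarrow> nat" where
  "degree V E v = card (nbhd V E v)"

definition min_degree :: "'a set \<Rightarrow> ('a \<Rightarrow> 'a \<Rightarrow> bool) \<Rightarrow> nat" where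
  "min_degree V E = Min (degree V E ` V)"

definition max_degree :: "'a set \<Rightarrow> ('a \<Rightarrow> 'a \<Rightarrow> bool) \<Rightarrow> nat" where
  "max_degree V E = Max (degree V E ` V)"

definition connected_graph :: "'a set \<Rightarrow> ('a \<Rightarrow> 'a \<Rightarrow> bool) \<Rightarrow> bool" where
  "connected_graph V E \<longleftrightarrow> (\<forall>u\<in>V. \<forall>v\<in>V. E\<^sup>*\<^sup>* u v)"

definition is_cycle :: "'a set \<Rightarrow> ('a \<Rightarrow> 'a \<Rightarrow> bool) \<Rightarrow> 'a list \<Rightarrow> bool" where
  "is_cycle V E cs \<longleftrightarrow> length cs \<ge> 3 \<and> distinct cs \<and> set cs \<subseteq> V \<and>
     (\<forall>i < length cs. E (cs ! i) (cs ! ((i + 1) mod length cs)))"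

text \<open>Girth at least g: every cycle has length at least g (vacuous for acyclic graphs,
whose girth is infinite).\<close>
definition girth_at_least :: "'a set \<Rightarrow> ('a \<Rightarrow> 'a \<Rightarrow> bool) \<Rightarrow> nat \<Rightarrow> bool" where
  "girth_at_least V E g \<longleftrightarrow> (\<forall>cs. is_cycle V E cs \<longrightarrow> length cs \<ge> g)"

definition active_nbhd :: "'a set \<Rightarrow> ('a \<Rightarrow> 'a \<Rightarrow> bool) \<Rightarrow> ('a \<Rightarrow> nat) \<Rightarrow> 'a \<Rightarrow> 'a set" where
  "active_nbhd V E h v = {w \<in> nbhd V E v. h w \<ge> 1}"

definition is_3RDF :: "'a set \<Rightarrow> ('a \<Rightarrow> 'a \<Rightarrow> bool) \<Rightarrow> ('a \<Rightarrow> nat) \<Rightarrow> bool" where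
  "is_3RDF V E h \<longleftrightarrow> (\<forall>v\<in>V. h v \<le> 4) \<and>
     (\<forall>v\<in>V. h v < 3 \<longrightarrow>
        sum h (insert v (active_nbhd V E h v)) \<ge> card (active_nbhd V E h v) + 3)"

definition triple_roman_domination_number :: "'a set \<Rightarrow> ('a \<Rightarrow> 'a \<Rightarrow> bool) \<Rightarrow> nat" where
  "triple_roman_domination_number V E = Inf {sum h V | h. is_3RDF V E h}"

end

theory Submission
  imports Defs
begin

lemma tri_free:
  assumes g: "girth_at_least V E 5" and "a \<in> V" "b \<in> V" "c \<in> V"
    and "E a b" "E b c" "E c a" and "distinct [a,b,c]"
  shows False
proof -
  have "is_cycle V E [a,b,c]"
    unfolding is_cycle_def using assms by (auto simp: less_Suc_eq)
  with g show False unfolding girth_at_least_def by fastforce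
qed

lemma sq_free:
  assumes g: "girth_at_least V E 5" and "a \<in> V" "b \<in> V" "c \<in> V" "d \<in> V"
    and "E a b" "E b c" "E c d" "E d a" and "distinct [a,b,c,d]"
  shows False
proof -
  have "is_cycle V E [a,b,c,d]"
    unfolding is_cycle_def using assms by (auto simp: less_Suc_eq)
  with g show False unfolding girth_at_least_def by fastforce
qed

lemma sum_ge2:
  fixes h :: "'a \<Rightarrow> nat"
  assumes "finite A" "\<forall>x\<in>A. h x \<ge> 1" "B \<subseteq> A"
  shows "sum h A \<ge> card A + sum (\<lambda>x. h x - 1) B"
proof -
  have "sum h A = sum (\<lambda>x. 1 + (h x - 1)) A"
    by (rule sum.cong) (use assms in auto)
  also have "\<dots> = card A + sum (\<lambda>x. h x - 1) A" by (simp only: sum.distrib) simp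
  finally show ?thesis using sum_mono2[OF assms(1) assms(3), of "\<lambda>x. h x - 1"] by simp
qed

theorem proposition9:
  fixes V :: "'a set" and E :: "'a \<Rightarrow> 'a \<Rightarrow> bool"
  assumes "simple_graph V E"
    and "connected_graph V E"
    and "card V \<ge> 2"
    and "min_degree V E \<ge> 2"
    and "girth_at_least V E 5"
  shows "int (triple_roman_domination_number V E)
           \<le> 2 * int (card V) - 2 * int (max_degree V E) + 1"
proof -
  have fin: "finite V" and inV: "\<And>u w. E u w \<Longrightarrow> u \<in> V \<and> w \<in> V"
    and sym: "\<And>u w. E u w \<Longrightarrow> E w u" and irr: "\<And>u. \<not> E u u"
    using assms(1) unfolding simple_graph_def by auto
  have ne: "V \<noteq> {}" using assms(3) by auto
  have g: "girth_at_least V E 5" by fact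
  have deg2: "\<And>x. x \<in> V \<Longrightarrow> card (nbhd V E x) \<ge> 2"
  proof -
    fix x assume "x \<in> V"
    hence "min_degree V E \<le> degree V E x" unfolding min_degree_def using fin by simp
    thus "card (nbhd V E x) \<ge> 2" using assms(4) unfolding degree_def by simp
  qed
  obtain v where vV: "v \<in> V" and vmax: "max_degree V E = card (nbhd V E v)"
  proof -
    have "Max (degree V E ` V) \<in> degree V E ` V" using fin ne by (intro Max_in) auto
    thus ?thesis using that unfolding max_degree_def degree_def by auto
  qed
  define N where "N = nbhd V E v"
  define R where "R = V - insert v N"
  define h where "h = (\<lambda>x. if x = v then 3 else if x \<in> N then 0 else (2::nat))"
  have NV: "N \<subseteq> V" unfolding N_def nbhd_def by auto
  have vN: "v \<notin> N" unfolding N_def nbhd_def using irr by auto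
  have finN: "finite N" using NV fin finite_subset by blast
  have finR: "finite R" unfolding R_def using fin by auto
  have Vsplit: "V = insert v (N \<union> R)" unfolding R_def using vV NV by auto
  have disj: "N \<inter> R = {}" unfolding R_def by auto
  have vR: "v \<notin> R" unfolding R_def by auto
  have sumV: "sum h V = 3 + 2 * card R"
  proof -
    have "sum h V = h v + sum h (N \<union> R)" unfolding Vsplit using vN vR finN finR by simp
    also have "\<dots> = h v + sum h N + sum h R" using finN finR disj by (simp add: sum.union_disjoint)
    also have "sum h N = 0" unfolding h_def using vN by (intro sum.neutral) auto
    also have "sum h R = sum (\<lambda>_. 2) R" unfolding h_def R_def by (rule sum.cong) auto
    finally show ?thesis unfolding h_def by simp
  qed
  have cardR: "card R = card V - 1 - card N"
  proof -
    have "card R = card V - card (insert v N)" unfolding R_def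
      using vV NV fin by (subst card_Diff_subset) (auto intro: finite_subset)
    thus ?thesis using vN finN by simp
  qed
  have cardNV: "card N + 1 \<le> card V"
    using card_mono[OF fin, of "insert v N"] vV NV vN finN by simp
  have rdf: "is_3RDF V E h"
    unfolding is_3RDF_def
  proof (intro conjI ballI impI)
    fix x assume "x \<in> V" show "h x \<le> 4" unfolding h_def by simp
  next
    fix x assume xV: "x \<in> V" and hx: "h x < 3"
    define A where "A = active_nbhd V E h x"
    have finA: "finite A" unfolding A_def active_nbhd_def nbhd_def using fin by auto
    have xA: "x \<notin> A" unfolding A_def active_nbhd_def nbhd_def using irr by auto
    have A1: "\<forall>y\<in>A. h y \<ge> 1" unfolding A_def active_nbhd_def by auto
    have sA: "sum h (insert x A) = h x + sum h A" using finA xA by simp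
    have xv: "x \<noteq> v" using hx unfolding h_def by auto
    have key: "h x + sum h A \<ge> card A + 3"
    proof (cases "x \<in> N")
      case True
      hence Exv: "E v x" "E x v" unfolding N_def nbhd_def using sym by auto
      have "card (nbhd V E x) \<ge> 2" using deg2 xV .
      then obtain w where w: "w \<in> nbhd V E x" "w \<noteq> v"
      proof -
        assume *: "\<And>w. w \<in> nbhd V E x \<Longrightarrow> w \<noteq> v \<Longrightarrow> thesis"
        show thesis
        proof (rule ccontr)
          assume "\<not> thesis"
          hence "nbhd V E x \<subseteq> {v}" using * by auto
          hence "card (nbhd V E x) \<le> 1" using card_mono[of "{v}"] by fastforce
          thus False using \<open>card (nbhd V E x) \<ge> 2\<close> by simp
        qed
      qed
      have Exw: "E x w" and wV: "w \<in> V" using w unfolding nbhd_def by auto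
      have wN: "w \<notin> N"
      proof
        assume "w \<in> N"
        hence "E v w" unfolding N_def nbhd_def by auto
        show False
          by (rule tri_free[OF g vV xV wV Exv(1) Exw]) (use \<open>E v w\<close> sym irr xv w(2) Exw in auto)
      qed
      have hw: "h w = 2" unfolding h_def using wN w(2) by simp
      have vA: "v \<in> A" unfolding A_def active_nbhd_def nbhd_def h_def using vV Exv by simp
      have wA: "w \<in> A" unfolding A_def active_nbhd_def nbhd_def using hw wV Exw by simp
      have "sum h A \<ge> card A + sum (\<lambda>y. h y - 1) {v, w}"
        using sum_ge2[OF finA A1] vA wA by simp
      moreover have "sum (\<lambda>y. h y - 1) {v, w} = 3" using hw w(2) unfolding h_def by simp
      ultimately show ?thesis by simp
    next
      case False
      hence xR: "x \<in> R" unfolding R_def using xV xv by auto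
      have hx2: "h x = 2" unfolding h_def using xv False by simp
      obtain w where w: "w \<in> nbhd V E x" "w \<in> R"
      proof (rule ccontr)
        assume nw: "\<not> thesis"
        have sub: "nbhd V E x \<subseteq> N"
        proof
          fix y assume y: "y \<in> nbhd V E x"
          hence "y \<notin> R" using nw that by blast
          moreover have "y \<noteq> v" using y False sym xV unfolding N_def nbhd_def by auto
          ultimately show "y \<in> N" using y unfolding R_def nbhd_def by auto
        qed
        have "card (nbhd V E x) \<ge> 2" using deg2 xV .
        then obtain a b where ab: "a \<in> nbhd V E x" "b \<in> nbhd V E x" "a \<noteq> b"
        proof -
          assume *: "\<And>a b. a \<in> nbhd V E x \<Longrightarrow> b \<in> nbhd V E x \<Longrightarrow> a \<noteq> b \<Longrightarrow> thesis"
          show thesis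
          proof (rule ccontr)
            assume "\<not> thesis"
            hence "\<forall>a\<in>nbhd V E x. \<forall>b\<in>nbhd V E x. a = b" using * by blast
            hence "card (nbhd V E x) \<le> 1" using card_le_Suc0_iff_eq[of "nbhd V E x"]
              fin unfolding nbhd_def by auto
            thus False using \<open>card (nbhd V E x) \<ge> 2\<close> by simp
          qed
        qed
        have aN: "a \<in> N" and bN: "b \<in> N" using ab sub by auto
        have "E v a" "E v b" using aN bN unfolding N_def nbhd_def by auto
        moreover have "E x a" "E x b" using ab unfolding nbhd_def by auto
        moreover have "a \<in> V" "b \<in> V" using aN bN NV by auto
        ultimately show False
          using sq_free[OF g vV \<open>a \<in> V\<close> xV \<open>b \<in> V\<close>] sym xv ab(3) aN bN False
          by (metis distinct_length_2_or_more distinct_singleton list.set_intros(1)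
               set_ConsD vN)
      qed
      have hw: "h w = 2" using w(2) unfolding h_def R_def by auto
      have wA: "w \<in> A" unfolding A_def active_nbhd_def using w hw by simp
      have "sum h A \<ge> card A + sum (\<lambda>y. h y - 1) {w}"
        using sum_ge2[OF finA A1, of "{w}"] wA by simp
      thus ?thesis using hw hx2 by simp
    qed
    show "sum h (insert x (active_nbhd V E h x)) \<ge> card (active_nbhd V E h x) + 3"
      using key sA unfolding A_def by simp
  qed
  have "triple_roman_domination_number V E \<le> sum h V"
    unfolding triple_roman_domination_number_def
    by (rule cInf_lower) (use rdf in auto)
  thus ?thesis using sumV cardR cardNV vmax N_def by simp
qed

end
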